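(* For every $\tau\ge0$, let $\rho_\tau=\{(x,v)\in\mathcal{H}:v=\tau\}$. Then $d_H((0,1),\rho_\tau):=\inf_{P\in\rho_\tau}d_H((0,1),P)=2|\sqrt\tau-1|$.
   Context: Let $\mathcal{H}=\{(x,v)\in\mathbb{R}^2:v\ge0\}$ and let $d_H$ be the Riemannian distance on $\mathcal{H}$ induced by the metric $ds^2=v^{-1}(dx^2+dv^2)$ on the open upper half-plane (extended to the boundary $v=0$). *)

theory Defs
  imports "HOL-Analysis.Analysis"
begin

definition halfplane :: "(real \<times> real) set" where
  "halfplane = {(x, v). v \<ge> 0}"

definition admissible_curve :: "(real \<Rightarrow> real \<times> real) \<Rightarrow> real \<times> real \<Rightarrow> real \<times> real \<Rightarrow> bool" where
  "admissible_curve \<gamma> p q \<longleftrightarrow>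
     \<gamma> piecewise_C1_differentiable_on {0..1} \<and> \<gamma> 0 = p \<and> \<gamma> 1 = q \<and>
     (\<forall>t\<in>{0..1}. \<gamma> t \<in> halfplane) \<and> (\<forall>t\<in>{0<..<1}. snd (\<gamma> t) > 0)"

text \<open>Length density for ds^2 = v^{-1}(dx^2 + dv^2): |gamma'(t)| / sqrt(v(gamma(t))).\<close>
definition H_speed :: "(real \<Rightarrow> real \<times> real) \<Rightarrow> real \<Rightarrow> real" where
  "H_speed \<gamma> t = norm (vector_derivative \<gamma> (at t)) / sqrt (snd (\<gamma> t))"

definition dH :: "real \<times> real \<Rightarrow> real \<times> real \<Rightarrow> real" where
  "dH p q = Inf {L. \<exists>\<gamma>. admissible_curve \<gamma> p q \<and> (H_speed \<gamma> has_integral L) {0..1}}"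

definition rho :: "real \<Rightarrow> (real \<times> real) set" where
  "rho \<tau> = {P \<in> halfplane. snd P = \<tau>}"

end

theory Submission imports Defs begin

lemma lower:
  assumes adm: "admissible_curve \<gamma> (0,1) q" and q: "snd q = \<tau>" and tau: "\<tau> \<ge> 0"
    and L: "(H_speed \<gamma> has_integral L) {0..1}"
  shows "2 * \<bar>sqrt \<tau> - 1\<bar> \<le> L"
proof -
  from adm obtain S where S: "finite S" "\<gamma> C1_differentiable_on ({0..1} - S)"
    and cont: "continuous_on {0..1} \<gamma>" and g0: "\<gamma> 0 = (0,1)" and g1: "\<gamma> 1 = q"
    and pos: "\<forall>t\<in>{0<..<1}. snd (\<gamma> t) > 0" and hp: "\<forall>t\<in>{0..1}. \<gamma> t \<in> halfplane"
    unfolding admissible_curve_def piecewise_C1_differentiable_on_def by blast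
  from S(2) obtain D where D: "\<And>x. x\<in>{0..1} - S \<Longrightarrow> (\<gamma> has_vector_derivative D x) (at x)"
    unfolding C1_differentiable_on_def by blast
  define g where "g t = 2 * sqrt (snd (\<gamma> t))" for t
  define g' where "g' t = (if t \<in> {0<..<1} - S then snd (D t) / sqrt (snd (\<gamma> t)) else 0)" for t
  have deriv: "(g has_vector_derivative g' t) (at t)" if t: "t \<in> {0<..<1} - S" for t
  proof -
    have "(\<gamma> has_vector_derivative D t) (at t)" using D t by auto
    then have "((\<lambda>t. snd (\<gamma> t)) has_vector_derivative snd (D t)) (at t)"
      unfolding has_vector_derivative_def using has_derivative_snd by fastforce
    then have d1: "((\<lambda>t. snd (\<gamma> t)) has_real_derivative snd (D t)) (at t)"
      by (simp add: has_real_derivative_iff_has_vector_derivative)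
    have p: "snd (\<gamma> t) > 0" using pos t by auto
    have "(g has_real_derivative 2 * (inverse (sqrt (snd (\<gamma> t))) / 2 * snd (D t))) (at t)"
      unfolding g_def
      by (intro DERIV_cmult DERIV_chain2[OF DERIV_real_sqrt[OF p] d1])
    then show ?thesis using t p
      by (simp add: has_real_derivative_iff_has_vector_derivative g'_def field_simps)
  qed
  have gc: "continuous_on {0..1} g" unfolding g_def
    by (intro continuous_intros continuous_on_compose2[OF continuous_on_snd cont]) auto
  have ftc: "(g' has_integral (g 1 - g 0)) {0..1}"
    by (rule fundamental_theorem_of_calculus_interior_strong[OF S(1) _ deriv gc]) auto
  have gv: "g 1 - g 0 = 2 * sqrt \<tau> - 2" using g0 g1 q by (simp add: g_def)
  have bnd: "\<bar>g' t\<bar> \<le> H_speed \<gamma> t" if "t \<in> {0..1}" for t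
  proof (cases "t \<in> {0<..<1} - S")
    case True
    then have "vector_derivative \<gamma> (at t) = D t" by (intro vector_derivative_at D) auto
    moreover have "\<bar>snd (D t)\<bar> \<le> norm (D t)"
      by (metis norm_snd_le prod.collapse real_norm_def)
    moreover have "snd (\<gamma> t) > 0" using pos True by auto
    ultimately show ?thesis using True
      by (simp add: g'_def H_speed_def abs_div divide_right_mono)
  next
    case False
    have "snd (\<gamma> t) \<ge> 0" using hp that unfolding halfplane_def by (metis (mono_tags, lifting) case_prod_unfold mem_Collect_eq)
    moreover have "g' t = 0" using False unfolding g'_def by meson
    ultimately show ?thesis by (simp add: H_speed_def)
  qed
  have a: "g 1 - g 0 \<le> L"
    by (rule has_integral_le[OF ftc L]) (use bnd in fastforce)
  have b: "-(g 1 - g 0) \<le> L"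
    by (rule has_integral_le[OF has_integral_neg[OF ftc] L]) (use bnd in fastforce)
  show ?thesis using a b gv by (simp add: abs_if)
qed

lemma construction:
  fixes x \<tau> :: real
  assumes tau: "\<tau> \<ge> 0"
  defines "s \<equiv> sqrt \<tau>"
  defines "w \<equiv> (\<lambda>t::real. 1 + t * (s - 1))"
  defines "\<gamma> \<equiv> (\<lambda>t. (x * (2 * t - t^2), (w t)^2))"
  shows "admissible_curve \<gamma> (0,1) (x,\<tau>)"
    and "\<exists>L. (H_speed \<gamma> has_integral L) {0..1}"
    and "x = 0 \<Longrightarrow> (H_speed \<gamma> has_integral 2 * \<bar>s - 1\<bar>) {0..1}"
proof -
  have s0: "s \<ge> 0" using tau by (simp add: s_def)
  have ss: "s^2 = \<tau>" using tau by (simp add: s_def)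
  define D where "D t = (x * (2 - 2 * t), 2 * w t * (s - 1))" for t
  have der: "(\<gamma> has_vector_derivative D t) (at t)" for t
  proof -
    have a: "((\<lambda>t. x * (2 * t - t^2)) has_real_derivative x * (2 - 2 * t)) (at t)"
      by (auto intro!: derivative_eq_intros)
    have b: "((\<lambda>t. (w t)^2) has_real_derivative 2 * w t * (s - 1)) (at t)"
      unfolding w_def by (auto intro!: derivative_eq_intros)
    show ?thesis unfolding \<gamma>_def D_def
      using has_vector_derivative_Pair[OF a[unfolded has_real_derivative_iff_has_vector_derivative]
          b[unfolded has_real_derivative_iff_has_vector_derivative]] by simp
  qed
  have vd: "vector_derivative \<gamma> (at t) = D t" for t
    using der vector_derivative_at by blast
  have wpos: "w t > 0" if "0 \<le> t" "t < 1" for t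
  proof -
    have "w t = (1 - t) + t * s" by (simp add: w_def algebra_simps)
    moreover have "t * s \<ge> 0" using that s0 by simp
    ultimately show ?thesis using that by linarith
  qed
  have wnn: "w t \<ge> 0" if "0 \<le> t" "t \<le> 1" for t
  proof -
    have "w t = (1 - t) + t * s" by (simp add: w_def algebra_simps)
    moreover have "t * s \<ge> 0" using that s0 by simp
    ultimately show ?thesis using that by linarith
  qed
  have Dc: "continuous_on UNIV D" unfolding D_def w_def by (intro continuous_intros)
  have C1: "\<gamma> C1_differentiable_on {0..1}"
    unfolding C1_differentiable_on_def using der continuous_on_subset[OF Dc] by blast
  show "admissible_curve \<gamma> (0,1) (x,\<tau>)"
    unfolding admissible_curve_def
  proof (intro conjI ballI)
    show "\<gamma> piecewise_C1_differentiable_on {0..1}" using C1 C1_differentiable_imp_piecewise by blast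
    show "\<gamma> 0 = (0,1)" by (simp add: \<gamma>_def w_def)
    show "\<gamma> 1 = (x,\<tau>)" using ss by (simp add: \<gamma>_def w_def)
    show "\<gamma> t \<in> halfplane" for t by (simp add: \<gamma>_def halfplane_def)
    show "snd (\<gamma> t) > 0" if "t \<in> {0<..<1}" for t using wpos[of t] that by (simp add: \<gamma>_def)
  qed
  define G where "G t = sqrt ((x * (2 - 2 * t) / w t)^2 + (2 * (s - 1))^2)" for t
  have HG: "H_speed \<gamma> t = G t" if "0 \<le> t" "t < 1" for t
  proof -
    have wp: "w t > 0" using wpos that by auto
    have "H_speed \<gamma> t = sqrt ((x * (2 - 2 * t))^2 + (2 * w t * (s - 1))^2) / sqrt ((w t)^2)"
      unfolding H_speed_def vd by (simp add: D_def \<gamma>_def norm_Pair)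
    also have "\<dots> = sqrt (((x * (2 - 2 * t))^2 + (2 * w t * (s - 1))^2) / (w t)^2)"
      by (simp add: real_sqrt_divide)
    also have "((x * (2 - 2 * t))^2 + (2 * w t * (s - 1))^2) / (w t)^2
        = (x * (2 - 2 * t) / w t)^2 + (2 * (s - 1))^2"
      using wp by (simp add: field_simps power2_eq_square)
    finally show ?thesis by (simp add: G_def)
  qed
  show "\<exists>L. (H_speed \<gamma> has_integral L) {0..1}"
  proof (cases "s > 0")
    case True
    have wp: "w t \<noteq> 0" if "t \<in> {0..1}" for t
    proof (cases "t < 1")
      case True then show ?thesis using wpos that by force
    next
      case False then have "t = 1" using that by auto
      then show ?thesis using \<open>s > 0\<close> by (simp add: w_def)
    qed
    have "continuous_on {0..1} G" unfolding G_def
      by (intro continuous_intros) (use wp in \<open>auto simp: w_def intro!: continuous_intros\<close>)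
    then have "(G has_integral integral {0..1} G) {0..1}"
      using integrable_continuous_interval integrable_integral by blast
    then have "(H_speed \<gamma> has_integral integral {0..1} G) {0..1}"
      by (intro has_integral_spike_finite[of "{1}", OF _ _ \<open>(G has_integral _) _\<close>]) (auto simp: HG)
    then show ?thesis by blast
  next
    case False
    then have s: "s = 0" using s0 by simp
    have "H_speed \<gamma> t = sqrt ((2 * x)^2 + 4)" if "t \<in> {0..1} - {1}" for t
    proof -
      have "t < 1" "0 \<le> t" using that by auto
      then have "x * (2 - 2 * t) / w t = 2 * x" using s by (simp add: w_def field_simps)
      then show ?thesis using HG[OF \<open>0 \<le> t\<close> \<open>t < 1\<close>] by (simp add: G_def s)
    qed
    moreover have c: "((\<lambda>t. sqrt ((2 * x)^2 + 4)) has_integral sqrt ((2 * x)^2 + 4)) {0..1::real}"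
      using has_integral_const_real[of "sqrt ((2 * x)^2 + 4)" "0::real" 1] by simp
    ultimately have "(H_speed \<gamma> has_integral sqrt ((2 * x)^2 + 4)) {0..1}"
      by (intro has_integral_spike_finite[of "{1}", OF _ _ c]) auto
    then show ?thesis by blast
  qed
  show "(H_speed \<gamma> has_integral 2 * \<bar>s - 1\<bar>) {0..1}" if "x = 0"
  proof -
    have "H_speed \<gamma> t = 2 * \<bar>s - 1\<bar>" if "t \<in> {0..1} - {1}" for t
    proof -
      have "t < 1" "0 \<le> t" using that by auto
      then show ?thesis using HG[OF \<open>0 \<le> t\<close> \<open>t < 1\<close>] \<open>x = 0\<close>
        by (simp add: G_def real_sqrt_mult abs_if)
    qed
    moreover have c: "((\<lambda>t. 2 * \<bar>s - 1\<bar>) has_integral 2 * \<bar>s - 1\<bar>) {0..1::real}"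
      using has_integral_const_real[of "2 * \<bar>s - 1\<bar>" "0::real" 1] by simp
    ultimately show ?thesis
      by (intro has_integral_spike_finite[of "{1}", OF _ _ c]) auto
  qed
qed

theorem theorem2p4:
  fixes \<tau> :: real
  assumes "\<tau> \<ge> 0"
  shows "(INF P\<in>rho \<tau>. dH (0, 1) P) = 2 * \<bar>sqrt \<tau> - 1\<bar>"
proof -
  define b where "b = 2 * \<bar>sqrt \<tau> - 1\<bar>"
  define A where "A P = {L. \<exists>\<gamma>. admissible_curve \<gamma> (0,1) P \<and> (H_speed \<gamma> has_integral L) {0..1}}" for P
  have dHA: "dH (0,1) P = Inf (A P)" for P by (simp add: dH_def A_def)
  have ge: "dH (0,1) P \<ge> b" if Pr: "P \<in> rho \<tau>" for P
  proof -
    obtain x where P: "P = (x, \<tau>)" using Pr by (cases P) (auto simp: rho_def)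
    have "A P \<noteq> {}"
      using construction(1,2)[OF assms, of x] by (auto simp: A_def P)
    moreover have "\<forall>L\<in>A P. b \<le> L"
      using lower[OF _ _ assms] by (auto simp: A_def P b_def)
    ultimately show ?thesis unfolding dHA by (intro cInf_greatest) auto
  qed
  have P0: "(0, \<tau>) \<in> rho \<tau>" using assms by (simp add: rho_def halfplane_def)
  have "b \<in> A (0,\<tau>)"
    using construction(1,3)[OF assms, of 0] by (auto simp: A_def b_def)
  moreover have "bdd_below (A (0,\<tau>))"
    unfolding bdd_below_def A_def using lower[OF _ _ assms, of _ "(0,\<tau>)"] by force
  ultimately have le: "dH (0,1) (0,\<tau>) \<le> b" unfolding dHA by (rule cInf_lower)
  have "(INF P\<in>rho \<tau>. dH (0, 1) P) \<le> b"
  proof (rule order_trans[OF _ le])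
    have "bdd_below ((\<lambda>P. dH (0, 1) P) ` rho \<tau>)" unfolding bdd_below_def using ge by blast
    then show "(INF P\<in>rho \<tau>. dH (0, 1) P) \<le> dH (0,1) (0,\<tau>)" using P0 by (rule cINF_lower)
  qed
  moreover have "(INF P\<in>rho \<tau>. dH (0, 1) P) \<ge> b"
    using P0 ge by (intro cINF_greatest) auto
  ultimately show ?thesis by (simp add: b_def)
qed

end
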